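(* Suppose $1<R\le n$ and let $\ell_2=\min\{n,\lfloor n/R\rfloor\}$. Then for every bid set $B_{\mathcal D}$ of $\mathcal D$ (a multiset of $n$ nonnegative reals with sum $\beta$), $$W(\pi_{\rm unif},B_{\mathcal D})\ge f(\ell_2).$$
   Context: Position-randomized auction with two bidders $\mathcal A$ and $\mathcal D$ and $n\ge1$ objects. $\mathcal D$ has budget $\beta>0$ and $\mathcal A$ has budget $R\beta$ with $R>0$. A bidding algorithm of a bidder is a pair $(\pi,B)$: $B$ (the bid set) is a multiset of $n$ nonnegative reals whose sum is at most the bidder's budget, and $\pi$ is a randomized algorithm permuting sequences of length $n$. Applying $\pi$ to a listing of $B$ gives the final bid sequence, whose $i$-th entry is the bid on object $i$. The two bidders' permutations are independent. Each object goes to the higher bid; on a tie each bidder wins it with probability $1/2$. $w(\pi_{\mathcal A},\pi_{\mathcal D},B_{\mathcal A},B_{\mathcal D})$ is the expected number of objects won by $\mathcal A$. $W(\pi_{\mathcal D},B_{\mathcal D})$ is its supremum over all bidding algorithms $(\pi_{\mathcal A},B_{\mathcal A})$ of $\mathcal A$. $\pi_{\rm unif}$ applies a uniformly random permutation. For $x,y>0$, $\mathrm{less}(x,y)=y(\lceil x/y\rceil-1)$. For $\ell=1,\dots,n$, let $R_\ell=\mathrm{less}(R,\frac2{\ell(\ell+1)})$ and $f(\ell)=n-\ell+\frac{\ell(\ell+1)R_\ell}{2n}$. *)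

theory Defs
  imports "HOL-Probability.Probability" "HOL-Combinatorics.Permutations"
begin

definition is_perm_alg :: "(real list \<Rightarrow> real list pmf) \<Rightarrow> bool" where
  "is_perm_alg \<pi> \<longleftrightarrow> (\<forall>xs. \<forall>ys \<in> set_pmf (\<pi> xs). mset ys = mset xs)"

definition is_bid_set :: "nat \<Rightarrow> real \<Rightarrow> real multiset \<Rightarrow> bool" where
  "is_bid_set n b B \<longleftrightarrow> size B = n \<and> (\<forall>x \<in># B. 0 \<le> x) \<and> sum_mset B \<le> b"

definition is_bidding_alg :: "nat \<Rightarrow> real \<Rightarrow> (real list \<Rightarrow> real list pmf) \<Rightarrow> real multiset \<Rightarrow> bool" where
  "is_bidding_alg n b \<pi> B \<longleftrightarrow> is_perm_alg \<pi> \<and> is_bid_set n b B"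

definition pi_unif :: "real list \<Rightarrow> real list pmf" where
  "pi_unif xs = map_pmf (\<lambda>\<sigma>. permute_list \<sigma> xs)
      (pmf_of_set {\<sigma>. \<sigma> permutes {..<length xs}})"

definition win_A :: "real \<Rightarrow> real \<Rightarrow> real" where
  "win_A a d = (if a > d then 1 else if a = d then 1/2 else 0)"

definition w :: "nat \<Rightarrow> (real list \<Rightarrow> real list pmf) \<Rightarrow> (real list \<Rightarrow> real list pmf)
                 \<Rightarrow> real multiset \<Rightarrow> real multiset \<Rightarrow> real" where
  "w n \<pi>A \<pi>D BA BD =
     measure_pmf.expectation
       (pair_pmf (\<pi>A (sorted_list_of_multiset BA)) (\<pi>D (sorted_list_of_multiset BD)))
       (\<lambda>(a, d). \<Sum>i<n. win_A (a ! i) (d ! i))"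

definition W :: "nat \<Rightarrow> real \<Rightarrow> real \<Rightarrow> (real list \<Rightarrow> real list pmf) \<Rightarrow> real multiset \<Rightarrow> real" where
  "W n R \<beta> \<pi>D BD =
     (SUP p \<in> {(\<pi>A, BA). is_bidding_alg n (R * \<beta>) \<pi>A BA}. w n (fst p) \<pi>D (snd p) BD)"

definition less :: "real \<Rightarrow> real \<Rightarrow> real" where
  "less x y = y * (of_int \<lceil>x / y\<rceil> - 1)"

definition R_l :: "real \<Rightarrow> nat \<Rightarrow> real" where
  "R_l R l = less R (2 / (real l * (real l + 1)))"

definition f_val :: "nat \<Rightarrow> real \<Rightarrow> nat \<Rightarrow> real" where
  "f_val n R l = real n - real l + real l * (real l + 1) * R_l R l / (2 * real n)"

end

theory Submission
  imports Defs
begin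

lemma perm_fiber_eq:
  assumes "k < n" "k' < n"
  shows "(\<Sum>\<sigma>\<in>{\<sigma>. \<sigma> permutes {..<n}}. (if \<sigma> i = k then 1 else 0::real))
       = (\<Sum>\<sigma>\<in>{\<sigma>. \<sigma> permutes {..<n}}. (if \<sigma> i = k' then 1 else 0::real))"
proof -
  have q: "Transposition.transpose k k' permutes {..<n}" using assms by (simp add: permutes_swap_id)
  have "(\<Sum>\<sigma>\<in>{\<sigma>. \<sigma> permutes {..<n}}. (if \<sigma> i = k then 1 else 0::real))
     = (\<Sum>\<sigma>\<in>{\<sigma>. \<sigma> permutes {..<n}}. (if (Transposition.transpose k k' \<circ> \<sigma>) i = k then 1 else 0::real))"
    by (rule setum_permutations_compose_left[OF q])
  also have "\<dots> = (\<Sum>\<sigma>\<in>{\<sigma>. \<sigma> permutes {..<n}}. (if \<sigma> i = k' then 1 else 0::real))"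
    by (intro sum.cong refl) (auto simp: Transposition.transpose_eq_iff)
  finally show ?thesis .
qed

lemma perm_avg:
  fixes g :: "nat \<Rightarrow> real"
  assumes "i < n"
  shows "(\<Sum>\<sigma>\<in>{\<sigma>. \<sigma> permutes {..<n}}. g (\<sigma> i)) / card {\<sigma>. \<sigma> permutes {..<n}}
         = (\<Sum>k<n. g k) / n"
proof -
  let ?P = "{\<sigma>. \<sigma> permutes {..<n}}"
  define c where "c = (\<Sum>\<sigma>\<in>?P. (if \<sigma> i = 0 then 1 else 0::real))"
  have fin: "finite ?P" by (simp add: finite_permutations)
  have ck: "(\<Sum>\<sigma>\<in>?P. (if \<sigma> i = k then 1 else 0::real)) = c" if "k < n" for k
    unfolding c_def using perm_fiber_eq[of k n 0 i] that assms by simp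
  have si: "\<sigma> i < n" if "\<sigma> \<in> ?P" for \<sigma>
    using that assms permutes_in_image[of \<sigma> "{..<n}" i] by auto
  have "(\<Sum>\<sigma>\<in>?P. g (\<sigma> i)) = (\<Sum>\<sigma>\<in>?P. \<Sum>k<n. (if \<sigma> i = k then g k else 0))"
  proof (intro sum.cong refl)
    fix \<sigma> assume "\<sigma> \<in> ?P"
    then have "\<sigma> i \<in> {..<n}" using si by auto
    then show "g (\<sigma> i) = (\<Sum>k<n. (if \<sigma> i = k then g k else 0))"
      by (simp add: sum.delta)
  qed
  also have "\<dots> = (\<Sum>k<n. (\<Sum>\<sigma>\<in>?P. (if \<sigma> i = k then 1 else 0)) * g k)"
    by (subst sum.swap) (simp add: sum_distrib_right if_distrib[of "\<lambda>x. x * g _"] cong: if_cong)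
  also have "\<dots> = c * (\<Sum>k<n. g k)"
    by (simp add: ck sum_distrib_left)
  finally have A: "(\<Sum>\<sigma>\<in>?P. g (\<sigma> i)) = c * (\<Sum>k<n. g k)" .
  have "real (card ?P) = (\<Sum>\<sigma>\<in>?P. \<Sum>k<n. (if \<sigma> i = k then 1 else 0::real))"
  proof -
    have "(\<Sum>\<sigma>\<in>?P. \<Sum>k<n. (if \<sigma> i = k then 1 else 0::real)) = (\<Sum>\<sigma>\<in>?P. 1)"
    proof (intro sum.cong refl)
      fix \<sigma> assume "\<sigma> \<in> ?P"
      then have "\<sigma> i \<in> {..<n}" using si by auto
      then show "(\<Sum>k<n. (if \<sigma> i = k then 1 else 0::real)) = 1"
        by (simp add: sum.delta)
    qed
    then show ?thesis by simp
  qed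
  also have "\<dots> = (\<Sum>k<n. (\<Sum>\<sigma>\<in>?P. (if \<sigma> i = k then 1 else 0::real)))"
    by (rule sum.swap)
  also have "\<dots> = n * c" by (simp add: ck)
  finally have B: "real (card ?P) = n * c" .
  have "card ?P > 0" using fin by (auto simp: card_gt_0_iff intro: permutes_id)
  then have "c \<noteq> 0" "n > 0" using B assms by auto
  then show ?thesis using A B by (simp add: field_simps)
qed


lemma sum_nth_mset:
  fixes h :: "real \<Rightarrow> real"
  assumes "length xs = n"
  shows "(\<Sum>i<n. h (xs ! i)) = (\<Sum>x\<in>#mset xs. h x)"
proof -
  have "(\<Sum>x\<in>#mset xs. h x) = sum_list (map h xs)"
    by (metis mset_map sum_mset_sum_list)
  also have "\<dots> = (\<Sum>i<n. h (xs ! i))"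
    using assms by (simp add: sum_list_sum_nth atLeast0LessThan)
  finally show ?thesis by simp
qed

lemma w_return:
  assumes "size BA = n" "size BD = n" "n > 0"
  shows "w n (\<lambda>xs. return_pmf xs) pi_unif BA BD
       = (\<Sum>a\<in>#BA. \<Sum>d\<in>#BD. win_A a d) / n"
proof -
  define as where "as = sorted_list_of_multiset BA"
  define ds where "ds = sorted_list_of_multiset BD"
  have las: "length as = n" unfolding as_def using assms
    by (metis mset_sorted_list_of_multiset size_mset)
  have lds: "length ds = n" unfolding ds_def using assms
    by (metis mset_sorted_list_of_multiset size_mset)
  let ?P = "{\<sigma>. \<sigma> permutes {..<n}}"
  have finP: "finite ?P" by (simp add: finite_permutations)
  have neP: "?P \<noteq> {}" by (auto intro: permutes_id)
  have "w n (\<lambda>xs. return_pmf xs) pi_unif BA BD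
      = measure_pmf.expectation (pi_unif ds) (\<lambda>d. \<Sum>i<n. win_A (as ! i) (d ! i))"
    unfolding w_def as_def[symmetric] ds_def[symmetric] pair_return_pmf1 by simp
  also have "\<dots> = measure_pmf.expectation (pmf_of_set ?P)
      (\<lambda>\<sigma>. \<Sum>i<n. win_A (as ! i) (permute_list \<sigma> ds ! i))"
    unfolding pi_unif_def lds by simp
  also have "\<dots> = (\<Sum>\<sigma>\<in>?P. \<Sum>i<n. win_A (as ! i) (permute_list \<sigma> ds ! i)) / card ?P"
    using finP neP by (simp add: integral_pmf_of_set)
  also have "\<dots> = (\<Sum>\<sigma>\<in>?P. \<Sum>i<n. win_A (as ! i) (ds ! \<sigma> i)) / card ?P"
  proof -
    have "(\<Sum>i<n. win_A (as ! i) (permute_list \<sigma> ds ! i)) = (\<Sum>i<n. win_A (as ! i) (ds ! \<sigma> i))"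
      if "\<sigma> \<in> ?P" for \<sigma>
      using that lds by (intro sum.cong refl) (simp add: permute_list_nth)
    then show ?thesis by (metis (no_types, lifting) mem_Collect_eq sum.cong)
  qed
  also have "\<dots> = (\<Sum>i<n. (\<Sum>\<sigma>\<in>?P. win_A (as ! i) (ds ! \<sigma> i)) / card ?P)"
    by (subst sum.swap) (simp add: sum_divide_distrib)
  also have "\<dots> = (\<Sum>i<n. (\<Sum>k<n. win_A (as ! i) (ds ! k)) / n)"
    by (intro sum.cong refl) (rule perm_avg, simp)
  also have "\<dots> = (\<Sum>i<n. (\<Sum>k<n. win_A (as ! i) (ds ! k))) / n"
    by (simp add: sum_divide_distrib)
  also have "(\<Sum>i<n. (\<Sum>k<n. win_A (as ! i) (ds ! k))) = (\<Sum>a\<in>#BA. \<Sum>d\<in>#BD. win_A a d)"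
  proof -
    have "(\<Sum>i<n. (\<Sum>k<n. win_A (as ! i) (ds ! k))) = (\<Sum>i<n. (\<Sum>d\<in>#BD. win_A (as ! i) d))"
      using sum_nth_mset[OF lds] unfolding ds_def by simp
    also have "\<dots> = (\<Sum>a\<in>#BA. \<Sum>d\<in>#BD. win_A a d)"
      using sum_nth_mset[OF las, of "\<lambda>a. \<Sum>d\<in>#BD. win_A a d"] unfolding as_def by simp
    finally show ?thesis .
  qed
  finally show ?thesis .
qed


lemma select_K:
  fixes w :: "nat \<Rightarrow> real"
  assumes "finite S" "K \<le> card S"
  shows "\<exists>U \<subseteq> S. card U = K \<and> (\<exists>t. (\<forall>h\<in>U. w h \<le> t) \<and> (\<forall>h\<in>S - U. t \<le> w h))"
  using assms(2)
proof (induction K)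
  case 0
  show ?case by (rule exI[of _ "{}"]) (auto intro: exI[of _ "Min (w ` S)"] simp: assms(1))
next
  case (Suc K)
  then obtain U t where U: "U \<subseteq> S" "card U = K" "\<forall>h\<in>U. w h \<le> t" "\<forall>h\<in>S - U. t \<le> w h"
    by auto
  have fU: "finite U" using U(1) assms(1) finite_subset by blast
  have "card (S - U) > 0" using Suc.prems U(1,2) assms(1) by (simp add: card_Diff_subset fU)
  then have ne: "S - U \<noteq> {}" "finite (S - U)" using assms(1) by (metis card.empty less_irrefl, simp)
  have "Min (w ` (S - U)) \<in> w ` (S - U)" using ne by (intro Min_in) auto
  then obtain h0 where h0a: "h0 \<in> S - U" "w h0 = Min (w ` (S - U))" by auto
  have h0: "h0 \<in> S - U" "\<forall>h\<in>S - U. w h0 \<le> w h"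
    using h0a ne by auto
  show ?case
  proof (intro exI conjI)
    show "insert h0 U \<subseteq> S" using h0 U by auto
    show "card (insert h0 U) = Suc K" using h0 U fU by auto
    show "\<forall>h\<in>insert h0 U. w h \<le> w h0"
    proof
      fix h assume "h \<in> insert h0 U"
      then show "w h \<le> w h0"
      proof
        assume "h \<in> U" then have "w h \<le> t" using U by auto
        also have "t \<le> w h0" using U(4) h0(1) by auto
        finally show ?thesis .
      qed simp
    qed
    show "\<forall>h\<in>S - insert h0 U. w h0 \<le> w h" using h0 by auto
  qed
qed

lemma frac_bound:
  fixes w \<phi> :: "nat \<Rightarrow> real"
  assumes "finite S" "U \<subseteq> S" "card U = K"
    "\<forall>h\<in>U. w h \<le> t" "\<forall>h\<in>S - U. t \<le> w h"
    "\<forall>h\<in>S. 0 \<le> w h" "\<forall>h\<in>S. 0 \<le> \<phi> h \<and> \<phi> h \<le> 1"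
    "real K \<le> (\<Sum>h\<in>S. \<phi> h)"
  shows "(\<Sum>h\<in>U. w h) \<le> (\<Sum>h\<in>S. \<phi> h * w h)"
proof (cases "U = {}")
  case True
  then show ?thesis using assms by (simp add: sum_nonneg)
next
  case False
  then obtain u where "u \<in> U" by auto
  then have t0: "0 \<le> t" using assms by force
  have fU: "finite U" using assms finite_subset by blast
  have split: "(\<Sum>h\<in>S. g h) = (\<Sum>h\<in>U. g h) + (\<Sum>h\<in>S - U. g h)" for g :: "nat \<Rightarrow> real"
    using assms(1,2) by (metis add.commute sum.subset_diff)
  have "(\<Sum>h\<in>S - U. \<phi> h * w h) \<ge> (\<Sum>h\<in>S - U. \<phi> h * t)"
    using assms by (intro sum_mono mult_left_mono) auto
  moreover have "(\<Sum>h\<in>S - U. \<phi> h) \<ge> K - (\<Sum>h\<in>U. \<phi> h)"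
    using split[of \<phi>] assms(8) by linarith
  then have "(\<Sum>h\<in>S - U. \<phi> h * t) \<ge> (K - (\<Sum>h\<in>U. \<phi> h)) * t"
    using t0 by (simp add: sum_distrib_right[symmetric] mult_right_mono)
  moreover have "(K - (\<Sum>h\<in>U. \<phi> h)) * t = (\<Sum>h\<in>U. (1 - \<phi> h) * t)"
    using assms(3) by (simp add: sum_subtractf sum_distrib_right left_diff_distrib)
  moreover have "(\<Sum>h\<in>U. (1 - \<phi> h) * t) \<ge> (\<Sum>h\<in>U. (1 - \<phi> h) * w h)"
    using assms(2,4,7) by (intro sum_mono mult_left_mono) auto
  ultimately have "(\<Sum>h\<in>S - U. \<phi> h * w h) \<ge> (\<Sum>h\<in>U. (1 - \<phi> h) * w h)" by linarith
  then have "(\<Sum>h\<in>S. \<phi> h * w h) \<ge> (\<Sum>h\<in>U. \<phi> h * w h) + (\<Sum>h\<in>U. (1 - \<phi> h) * w h)"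
    using split[of "\<lambda>h. \<phi> h * w h"] by linarith
  also have "(\<Sum>h\<in>U. \<phi> h * w h) + (\<Sum>h\<in>U. (1 - \<phi> h) * w h) = (\<Sum>h\<in>U. w h)"
    by (simp add: sum.distrib[symmetric] algebra_simps)
  finally show ?thesis .
qed


lemma exN:
  fixes r :: real and l m :: nat and \<delta> :: "nat \<Rightarrow> real"
  assumes r1: "1 \<le> r"
    and m1: "real m < r * (\<Sum>k<l. real (k+1))"
    and m2: "r * (\<Sum>k<l. real (k+1)) < real m + 1"
    and d0: "\<forall>k<l. 0 \<le> \<delta> k"
  shows "\<exists>N::nat\<Rightarrow>nat. (\<forall>k. Suc k < l \<longrightarrow> N k \<le> N (Suc k))
     \<and> (\<forall>k<l. real (N k) \<le> of_int \<lceil>r * real (k+1)\<rceil>)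
     \<and> (\<Sum>k<l. N k) = m
     \<and> (\<Sum>k<l. real (N k) * \<delta> k) \<le> r * (\<Sum>k<l. real (k+1) * \<delta> k)"
proof -
  define fl where "fl k = nat \<lfloor>r * real (k+1)\<rfloor>" for k
  define \<phi> where "\<phi> k = r * real (k+1) - real (fl k)" for k
  have flr: "real (fl k) = of_int \<lfloor>r * real (k+1)\<rfloor>" for k
    unfolding fl_def using r1 by (intro of_nat_nat) (simp add: zero_le_floor)
  have \<phi>01: "0 \<le> \<phi> k \<and> \<phi> k < 1" for k
    unfolding \<phi>_def flr by linarith
  define S where "S = {k. k < l \<and> 0 < \<phi> k}"
  have finS: "finite S" unfolding S_def by auto
  have sumphi: "(\<Sum>k<l. \<phi> k) = (\<Sum>k\<in>S. \<phi> k)"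
  proof -
    have "(\<Sum>k<l. \<phi> k) = (\<Sum>k\<in>S. \<phi> k) + (\<Sum>k\<in>{..<l} - S. \<phi> k)"
      by (metis S_def add.commute finite_lessThan lessThan_iff mem_Collect_eq subsetI sum.subset_diff)
    moreover have "(\<Sum>k\<in>{..<l} - S. \<phi> k) = 0"
    proof (intro sum.neutral ballI)
      fix k assume "k \<in> {..<l} - S"
      then have "\<phi> k = 0" using \<phi>01[of k] unfolding S_def by auto
      then show "\<phi> k = 0" by simp
    qed
    ultimately show ?thesis by simp
  qed
  have phile: "(\<Sum>k\<in>S. \<phi> k) \<le> real (card S)"
    using sum_mono[of S \<phi> "\<lambda>_. 1"] \<phi>01 by (simp add: less_imp_le)
  have sumfl: "real (\<Sum>k<l. fl k) + (\<Sum>k<l. \<phi> k) = r * (\<Sum>k<l. real (k+1))"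
    unfolding \<phi>_def by (simp add: sum_subtractf sum_distrib_left)
  define Ki where "Ki = int m - int (\<Sum>k<l. fl k)"
  have Ki1: "real_of_int Ki > (\<Sum>k<l. \<phi> k) - 1" using sumfl m2 unfolding Ki_def by simp
  have Ki2: "real_of_int Ki < (\<Sum>k<l. \<phi> k)" using sumfl m1 unfolding Ki_def by simp
  have sphi0: "(\<Sum>k<l. \<phi> k) \<ge> 0" using \<phi>01 by (simp add: sum_nonneg)
  have "Ki \<ge> 0" using Ki1 sphi0 by linarith
  define K where "K = nat Ki"
  have K: "real K < (\<Sum>k\<in>S. \<phi> k)" "int K = Ki" using Ki2 \<open>Ki \<ge> 0\<close> sumphi unfolding K_def by auto
  have KS: "K \<le> card S" using K phile by linarith
  obtain U t where U: "U \<subseteq> S" "card U = K" "\<forall>h\<in>U. \<delta> h \<le> t" "\<forall>h\<in>S - U. t \<le> \<delta> h"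
    using select_K[OF finS KS, of \<delta>] by blast
  have fU: "finite U" using U(1) finS finite_subset by blast
  have Ul: "U \<subseteq> {..<l}" using U(1) unfolding S_def by auto
  define N where "N k = fl k + (if k \<in> U then 1 else 0)" for k
  show ?thesis
  proof (intro exI[of _ N] conjI allI impI)
    fix k assume "Suc k < l"
    have "r * real (Suc k + 1) \<ge> r * real (k+1) + 1" using r1 by (simp add: algebra_simps)
    then have "\<lfloor>r * real (Suc k + 1)\<rfloor> \<ge> \<lfloor>r * real (k+1)\<rfloor> + 1"
      by (metis floor_add_int floor_mono of_int_1)
    then have "of_int \<lfloor>r * real (k+1)\<rfloor> + 1 \<le> (of_int \<lfloor>r * real (Suc k + 1)\<rfloor> :: real)"
      by (metis of_int_1 of_int_add of_int_le_iff)
    then have "real (fl k + 1) \<le> real (fl (Suc k))" using flr[of k] flr[of "Suc k"] by simp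
    then have "fl (Suc k) \<ge> fl k + 1" by (simp only: of_nat_le_iff)
    then show "N k \<le> N (Suc k)" unfolding N_def by auto
  next
    fix k assume "k < l"
    show "real (N k) \<le> of_int \<lceil>r * real (k+1)\<rceil>"
    proof (cases "k \<in> U")
      case True
      then have "\<phi> k > 0" using U(1) unfolding S_def by auto
      then have "real (fl k) < r * real (k+1)" unfolding \<phi>_def by simp
      then have "real (fl k) + 1 \<le> of_int \<lceil>r * real (k+1)\<rceil>" unfolding flr
        by (metis ceiling_le_iff floor_less_iff of_int_1 of_int_add of_int_le_iff le_of_int_ceiling
                  ceiling_correct less_ceiling_iff linorder_not_le zle_add1_eq_le)
      then show ?thesis unfolding N_def using True by simp
    next
      case False
      have "real (fl k) = of_int \<lfloor>r * real (k+1)\<rfloor>" by (rule flr)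
      also have "\<dots> \<le> of_int \<lceil>r * real (k+1)\<rceil>" by (simp only: of_int_le_iff floor_le_ceiling)
      finally show ?thesis unfolding N_def using False by simp
    qed
  next
    have "(\<Sum>k<l. N k) = (\<Sum>k<l. fl k) + (\<Sum>k<l. (if k \<in> U then 1 else 0))"
      unfolding N_def by (simp add: sum.distrib)
    also have "(\<Sum>k<l. (if k \<in> U then 1 else 0::nat)) = card U"
      using Ul by (simp add: sum.If_cases Int_absorb2 Int_commute)
    finally show "(\<Sum>k<l. N k) = m" using U(2) K(2) unfolding Ki_def by linarith
  next
    have "(\<Sum>k<l. real (N k) * \<delta> k) = (\<Sum>k<l. real (fl k) * \<delta> k) + (\<Sum>k<l. (if k \<in> U then \<delta> k else 0))"
      unfolding N_def by (simp add: sum.distrib[symmetric]) (intro sum.cong refl, simp add: algebra_simps)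
    also have "(\<Sum>k<l. (if k \<in> U then \<delta> k else 0)) = (\<Sum>k\<in>U. \<delta> k)"
      using Ul by (simp add: sum.If_cases Int_absorb2 Int_commute)
    also have "(\<Sum>k\<in>U. \<delta> k) \<le> (\<Sum>k\<in>S. \<phi> k * \<delta> k)"
      using frac_bound[OF finS U(1) U(2) U(3) U(4)] d0 \<phi>01 K(1) unfolding S_def
      by (auto simp: less_imp_le)
    also have "(\<Sum>k\<in>S. \<phi> k * \<delta> k) = (\<Sum>k<l. \<phi> k * \<delta> k)"
    proof -
      have "(\<Sum>k<l. \<phi> k * \<delta> k) = (\<Sum>k\<in>S. \<phi> k * \<delta> k) + (\<Sum>k\<in>{..<l} - S. \<phi> k * \<delta> k)"
        by (metis S_def add.commute finite_lessThan lessThan_iff mem_Collect_eq subsetI sum.subset_diff)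
      moreover have "(\<Sum>k\<in>{..<l} - S. \<phi> k * \<delta> k) = 0"
      proof (intro sum.neutral ballI)
        fix k assume "k \<in> {..<l} - S"
        then have "\<phi> k = 0" using \<phi>01[of k] unfolding S_def by auto
        then show "\<phi> k * \<delta> k = 0" by simp
      qed
      ultimately show ?thesis by simp
    qed
    finally have "(\<Sum>k<l. real (N k) * \<delta> k) \<le> (\<Sum>k<l. real (fl k) * \<delta> k) + (\<Sum>k<l. \<phi> k * \<delta> k)"
      by simp
    also have "\<dots> = (\<Sum>k<l. (real (fl k) + \<phi> k) * \<delta> k)"
      by (simp add: sum.distrib[symmetric] algebra_simps)
    also have "\<dots> = r * (\<Sum>k<l. real (k+1) * \<delta> k)"
      unfolding \<phi>_def by (simp add: sum_distrib_left algebra_simps)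
    finally show "(\<Sum>k<l. real (N k) * \<delta> k) \<le> r * (\<Sum>k<l. real (k+1) * \<delta> k)" .
  qed
qed


lemma tele1:
  fixes e :: "nat \<Rightarrow> real"
  assumes "c \<le> l"
  shows "e (l - c) = e l + (\<Sum>k<l. if l - c \<le> k then e k - e (Suc k) else 0)"
proof -
  have "(\<Sum>k<l. if l - c \<le> k then e k - e (Suc k) else 0) = (\<Sum>k\<in>{l-c..<l}. e k - e (Suc k))"
    by (rule sum.mono_neutral_cong_right) auto
  also have "\<dots> = e (l - c) - e l"
    using sum_Suc_diff'[of "l-c" l "\<lambda>k. - e k"] by (simp add: sum_negf)
  finally show ?thesis by simp
qed

lemma tele2:
  fixes e :: "nat \<Rightarrow> real"
  shows "(\<Sum>k<l. real (k+1) * (e k - e (Suc k))) = (\<Sum>k<l. e k) - real l * e l"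
  by (induction l) (auto simp: algebra_simps)

lemma mono_chain:
  fixes N :: "nat \<Rightarrow> nat"
  assumes "\<forall>k. Suc k < l \<longrightarrow> N k \<le> N (Suc k)" "i \<le> j" "j < l"
  shows "N i \<le> N j"
  using assms(2,3)
proof (induction j)
  case 0 then show ?case by simp
next
  case (Suc j)
  show ?case
  proof (cases "i = Suc j")
    case False
    then have "N i \<le> N j" using Suc by auto
    also have "N j \<le> N (Suc j)" using assms(1) Suc by auto
    finally show ?thesis .
  qed simp
qed

lemma construct:
  fixes e :: "nat \<Rightarrow> real" and N :: "nat \<Rightarrow> nat" and r R \<beta> :: real
  assumes ln: "l < n"
    and emono: "\<forall>i j. i \<le> j \<longrightarrow> j < n \<longrightarrow> e j \<le> e i"
    and e0: "\<forall>k<n. 0 \<le> e k"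
    and esum: "(\<Sum>k<n. e k) \<le> \<beta>"
    and b0: "0 < \<beta>" and rR: "r < R" and nr: "real n \<le> r * real (l+1)"
    and Nmono: "\<forall>k. Suc k < l \<longrightarrow> N k \<le> N (Suc k)"
    and Nle: "\<forall>k<l. N k \<le> n"
    and cost: "(\<Sum>k<l. real (N k) * (e k - e (Suc k))) \<le> r * (\<Sum>k<l. real (k+1) * (e k - e (Suc k)))"
  shows "\<exists>a :: nat \<Rightarrow> real. (\<forall>j<n. 0 \<le> a j) \<and> (\<Sum>j<n. a j) \<le> R * \<beta>
     \<and> real (n * (n - l) + (\<Sum>k<l. N k)) \<le> (\<Sum>j<n. \<Sum>k<n. win_A (a j) (e k))"
proof -
  define c where "c j = card {k. k < l \<and> j < N k}" for j
  have cl: "c j \<le> l" for j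
    unfolding c_def by (rule order.trans[OF card_mono[of "{..<l}"]]) auto
  define C where "C = (\<Sum>j<n. e (l - c j))"
  define \<delta> where "\<delta> k = e k - e (Suc k)" for k
  have d0: "0 \<le> \<delta> k" if "k < l" for k
    unfolding \<delta>_def using emono ln that by auto
  have key: "card {j. j < n \<and> l - c j \<le> k} \<le> N k" if "k < l" for k
  proof -
    have "{j. j < n \<and> l - c j \<le> k} \<subseteq> {..<N k}"
    proof
      fix j assume j: "j \<in> {j. j < n \<and> l - c j \<le> k}"
      show "j \<in> {..<N k}"
      proof (rule ccontr)
        assume "j \<notin> {..<N k}"
        then have jN: "N k \<le> j" by auto
        have "{k'. k' < l \<and> j < N k'} \<subseteq> {Suc k..<l}"
        proof
          fix k' assume k': "k' \<in> {k'. k' < l \<and> j < N k'}"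
          have "\<not> k' \<le> k"
          proof
            assume "k' \<le> k"
            then have "N k' \<le> N k" using mono_chain[OF Nmono _ that] by auto
            then show False using k' jN by auto
          qed
          then show "k' \<in> {Suc k..<l}" using k' by auto
        qed
        then have "c j \<le> l - Suc k" unfolding c_def
          by (metis card_atLeastLessThan card_mono finite_atLeastLessThan)
        then show False using j that by auto
      qed
    qed
    then show ?thesis by (metis card_lessThan card_mono finite_lessThan)
  qed
  have "C = (\<Sum>j<n. e l + (\<Sum>k<l. if l - c j \<le> k then \<delta> k else 0))"
    unfolding C_def \<delta>_def using cl by (intro sum.cong refl tele1)
  also have "\<dots> = real n * e l + (\<Sum>k<l. \<delta> k * real (card {j. j < n \<and> l - c j \<le> k}))"
  proof -
    have "(\<Sum>j<n. \<Sum>k<l. if l - c j \<le> k then \<delta> k else 0) = (\<Sum>k<l. \<Sum>j<n. if l - c j \<le> k then \<delta> k else 0)"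
      by (rule sum.swap)
    also have "\<dots> = (\<Sum>k<l. \<delta> k * real (card {j. j < n \<and> l - c j \<le> k}))"
    proof (intro sum.cong refl)
      fix k
      have "(\<Sum>j<n. if l - c j \<le> k then \<delta> k else 0) = (\<Sum>j\<in>{j. j < n \<and> l - c j \<le> k}. \<delta> k)"
        by (rule sum.mono_neutral_cong_right) auto
      then show "(\<Sum>j<n. if l - c j \<le> k then \<delta> k else 0) = \<delta> k * real (card {j. j < n \<and> l - c j \<le> k})"
        by simp
    qed
    finally show ?thesis by (simp add: sum.distrib)
  qed
  also have "\<dots> \<le> real n * e l + (\<Sum>k<l. \<delta> k * real (N k))"
    using key d0 by (intro add_left_mono sum_mono mult_left_mono) auto
  also have "\<dots> \<le> real n * e l + r * ((\<Sum>k<l. e k) - real l * e l)"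
    using cost tele2[of e l] unfolding \<delta>_def by (simp add: mult.commute)
  also have "\<dots> = r * (\<Sum>k<Suc l. e k) + (real n - r * real (l+1)) * e l"
    by (simp add: algebra_simps)
  also have "\<dots> \<le> r * \<beta>"
  proof -
    have "(\<Sum>k<Suc l. e k) \<le> (\<Sum>k<n. e k)"
      using ln e0 by (intro sum_mono2) auto
    then have "(\<Sum>k<Suc l. e k) \<le> \<beta>" using esum by linarith
    moreover have "(real n - r * real (l+1)) * e l \<le> 0"
      using nr e0 ln by (intro mult_nonpos_nonneg) auto
    moreover have "r \<ge> 0"
    proof (rule ccontr)
      assume "\<not> 0 \<le> r"
      then have "r * real (l+1) \<le> 0" by (simp add: mult_nonpos_nonneg)
      then show False using nr ln by linarith
    qed
    ultimately show ?thesis by (smt (verit) mult_left_mono)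
  qed
  finally have CB: "C < R * \<beta>" using rR b0 by (smt (verit) mult_strict_right_mono)
  define \<epsilon> where "\<epsilon> = (R * \<beta> - C) / real n"
  have eps: "\<epsilon> > 0" using CB ln unfolding \<epsilon>_def by auto
  define a where "a j = e (l - c j) + \<epsilon>" for j
  show ?thesis
  proof (intro exI[of _ a] conjI allI impI)
    fix j assume "j < n"
    show "0 \<le> a j" unfolding a_def using e0 eps ln by (smt (verit) diff_le_self order.strict_trans1)
  next
    have "(\<Sum>j<n. a j) = C + real n * \<epsilon>" unfolding a_def C_def by (simp add: sum.distrib)
    also have "\<dots> = R * \<beta>" unfolding \<epsilon>_def using ln by simp
    finally show "(\<Sum>j<n. a j) \<le> R * \<beta>" by simp
  next
    have cnt: "real (n - l + c j) \<le> (\<Sum>k<n. win_A (a j) (e k))" for j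
    proof -
      have "(\<Sum>k<n. win_A (a j) (e k)) \<ge> (\<Sum>k\<in>{l - c j..<n}. win_A (a j) (e k))"
        by (rule sum_mono2) (auto simp: win_A_def)
      also have "(\<Sum>k\<in>{l - c j..<n}. win_A (a j) (e k)) = (\<Sum>k\<in>{l - c j..<n}. 1)"
      proof (intro sum.cong refl)
        fix k assume "k \<in> {l - c j..<n}"
        then have "e k \<le> e (l - c j)" using emono by auto
        then have "e k < a j" unfolding a_def using eps by simp
        then show "win_A (a j) (e k) = 1" by (simp add: win_A_def)
      qed
      also have "\<dots> = real (n - (l - c j))" by simp
      finally show ?thesis using cl[of j] ln by (simp add: Nat.diff_diff_right)
    qed
    have "(\<Sum>j<n. c j) = (\<Sum>k<l. N k)"
    proof -
      have "(\<Sum>j<n. c j) = (\<Sum>j<n. \<Sum>k<l. if j < N k then 1 else 0)"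
        unfolding c_def by (intro sum.cong refl) (simp add: sum.If_cases Int_def)
      also have "\<dots> = (\<Sum>k<l. \<Sum>j<n. if j < N k then 1 else 0)" by (rule sum.swap)
      also have "\<dots> = (\<Sum>k<l. N k)"
      proof (intro sum.cong refl)
        fix k assume "k \<in> {..<l}"
        then have "N k \<le> n" using Nle by auto
        then have "{..<n} \<inter> {j. j < N k} = {..<N k}" by auto
        then show "(\<Sum>j<n. if j < N k then 1 else 0) = N k"
          by (simp add: sum.If_cases)
      qed
      finally show ?thesis .
    qed
    then have "n * (n - l) + (\<Sum>k<l. N k) = (\<Sum>j<n. n - l + c j)"
      by (simp add: sum.distrib)
    then have "real (n * (n - l) + (\<Sum>k<l. N k)) = (\<Sum>j<n. real (n - l + c j))"
      by (metis of_nat_sum)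
    also have "\<dots> \<le> (\<Sum>j<n. \<Sum>k<n. win_A (a j) (e k))"
      by (rule sum_mono) (rule cnt)
    finally show "real (n * (n - l) + (\<Sum>k<l. N k)) \<le> (\<Sum>j<n. \<Sum>k<n. win_A (a j) (e k))" .
  qed
qed


lemma sum_mset_map_upt:
  fixes h :: "real \<Rightarrow> real"
  shows "(\<Sum>x\<in>#mset (map f [0..<n]). h x) = (\<Sum>k<n. h (f k))"
  using sum_nth_mset[of "map f [0..<n]" n h] by simp

lemma sumT: "(\<Sum>k<l. real (k+1)) = real l * (real l + 1) / 2"
  by (induction l) (auto simp: field_simps)

lemma w_le_n: "w n pA pD BA BD \<le> real n"
proof -
  have b: "\<bar>\<Sum>i<n. win_A (a ! i) (d ! i)\<bar> \<le> real n" for a d :: "real list"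
  proof -
    have "0 \<le> (\<Sum>i<n. win_A (a ! i) (d ! i))" by (intro sum_nonneg) (simp add: win_A_def)
    moreover have "(\<Sum>i<n. win_A (a ! i) (d ! i)) \<le> (\<Sum>i<n. 1)"
      by (intro sum_mono) (simp add: win_A_def)
    ultimately show ?thesis by simp
  qed
  show ?thesis unfolding w_def
    by (intro measure_pmf.integral_le_const measure_pmf.integrable_const_bound[where B="real n"])
       (use b in \<open>auto simp: abs_le_iff split: prod.splits\<close>)
qed

theorem lemma7:
  fixes n :: nat and R \<beta> :: real and BD :: "real multiset"
  assumes "n \<ge> 1" and "\<beta> > 0" and "1 < R" and "R \<le> real n"
    and "size BD = n" and "\<forall>x \<in># BD. 0 \<le> x" and "sum_mset BD = \<beta>"
  shows "W n R \<beta> pi_unif BD \<ge> f_val n R (min n (nat \<lfloor>real n / R\<rfloor>))"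
proof -
  note n1 = assms(1) and b0 = assms(2) and R1 = assms(3) and Rn = assms(4)
    and sBD = assms(5) and BD0 = assms(6) and sumBD = assms(7)
  define ds where "ds = sorted_list_of_multiset BD"
  have lds: "length ds = n" unfolding ds_def using sBD
    by (metis mset_sorted_list_of_multiset size_mset)
  have sds: "sorted ds" unfolding ds_def by simp
  have mds: "mset ds = BD" unfolding ds_def by simp
  define e where "e k = ds ! (n - 1 - k)" for k
  have map_e: "map e [0..<n] = rev ds"
    by (rule nth_equalityI) (auto simp: lds e_def rev_nth)
  have mBD: "mset (map e [0..<n]) = BD" using map_e mds by simp
  have sumBDe: "(\<Sum>x\<in>#BD. h x) = (\<Sum>k<n. h (e k))" for h :: "real \<Rightarrow> real"
    using sum_mset_map_upt[of h e n] mBD by simp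
  have emono: "\<forall>i j. i \<le> j \<longrightarrow> j < n \<longrightarrow> e j \<le> e i"
    unfolding e_def using sds lds by (auto intro!: sorted_nth_mono)
  have e0: "\<forall>k<n. 0 \<le> e k"
  proof (intro allI impI)
    fix k assume "k < n"
    then have "e k \<in> set ds" unfolding e_def using lds by auto
    then have "e k \<in># BD" using mds by (metis set_mset_mset)
    then show "0 \<le> e k" using BD0 by auto
  qed
  have esum: "(\<Sum>k<n. e k) \<le> \<beta>" using sumBDe[of "\<lambda>x. x"] sumBD by simp
  define l where "l = nat \<lfloor>real n / R\<rfloor>"
  have nR1: "real n / R \<ge> 1" using Rn R1 by (simp add: field_simps)
  have nRn: "real n / R < real n" using R1 n1 by (simp add: field_simps)
  have l1: "l \<ge> 1" unfolding l_def using nR1 by (simp add: le_nat_floor)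
  have lr: "real l \<le> real n / R" "real n / R < real l + 1"
    unfolding l_def using nR1 by (auto simp: of_nat_nat)
  have ln: "l < n" using lr nRn by linarith
  have minl: "min n (nat \<lfloor>real n / R\<rfloor>) = l" using ln unfolding l_def by simp
  have Rl: "R * real l \<le> real n" using lr(1) R1 by (simp add: field_simps)
  have Rl1: "real n < R * (real l + 1)" using lr(2) R1 by (simp add: field_simps)
  define T where "T = (\<Sum>k<l. real (k+1))"
  have T: "T = real l * (real l + 1) / 2" unfolding T_def by (rule sumT)
  have T0: "T > 0"
  proof -
    have "real l * (real l + 1) > 0" using l1 by (intro mult_pos_pos) auto
    then show ?thesis unfolding T by simp
  qed
  define mi where "mi = \<lceil>R * T\<rceil> - 1"
  have mi0: "mi \<ge> 0"
  proof -
    have "R * T > 0" using R1 T0 by (intro mult_pos_pos) auto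
    then have "\<lceil>R * T\<rceil> \<ge> 1" by (simp add: one_le_ceiling)
    then show ?thesis unfolding mi_def by simp
  qed
  define m where "m = nat mi"
  have mreal: "real m = real_of_int mi" unfolding m_def using mi0 by simp
  have m1: "real m < R * T" using mreal unfolding mi_def by linarith
  have m2: "R * T \<le> real m + 1" using mreal unfolding mi_def by linarith
  have fval: "f_val n R l = real n - real l + real m / real n"
  proof -
    have eq: "R / (2 / (real l * (real l + 1))) = R * T" unfolding T by (simp add: field_simps)
    have "R_l R l = 2 / (real l * (real l + 1)) * (of_int \<lceil>R / (2 / (real l * (real l + 1)))\<rceil> - 1)"
      by (simp only: R_l_def less_def)
    then have "R_l R l = 2 / (real l * (real l + 1)) * real_of_int mi"
      unfolding eq mi_def by simp
    moreover have "real l * (real l + 1) \<noteq> 0" using l1 by simp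
    ultimately have p: "real l * (real l + 1) * R_l R l = 2 * real_of_int mi" by simp
    show ?thesis unfolding f_val_def p mreal by simp
  qed
  define M where "M = max (real m / T) (max (real n / real (l+1)) 1)"
  have mT: "real m / T < R" using m1 T0 by (simp add: field_simps)
  have nl: "real n / real (l+1) < R" using Rl1 by (simp add: field_simps)
  have M: "real m / T \<le> M" "real n / real (l+1) \<le> M" "1 \<le> M" "M < R"
    unfolding M_def using mT nl R1 by auto
  define r where "r = (R + M) / 2"
  have Mr: "M < r" unfolding r_def using M(4) by simp
  have r1: "1 \<le> r" "r < R" unfolding r_def using M by auto
  have rm1: "real m < r * T"
  proof -
    have "real m / T < r" using M(1) Mr by linarith
    then show ?thesis using T0 by (simp add: field_simps)
  qed
  have rm2: "r * T < real m + 1" using m2 r1 T0 by (smt (verit) mult_strict_right_mono)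
  have rn: "real n \<le> r * real (l+1)"
  proof -
    have "real n / real (l+1) \<le> r" using M(2) Mr by linarith
    then show ?thesis by (simp add: field_simps)
  qed
  define \<delta> where "\<delta> k = e k - e (Suc k)" for k
  have d0: "\<forall>k<l. 0 \<le> \<delta> k" unfolding \<delta>_def using emono ln by auto
  obtain N where N: "\<forall>k. Suc k < l \<longrightarrow> N k \<le> N (Suc k)"
     "\<forall>k<l. real (N k) \<le> of_int \<lceil>r * real (k+1)\<rceil>"
     "(\<Sum>k<l. N k) = m"
     "(\<Sum>k<l. real (N k) * \<delta> k) \<le> r * (\<Sum>k<l. real (k+1) * \<delta> k)"
    using exN[OF r1(1) rm1[unfolded T_def] rm2[unfolded T_def] d0] by blast
  have Nle: "\<forall>k<l. N k \<le> n"
  proof (intro allI impI)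
    fix k assume k: "k < l"
    have "r * real (k+1) \<le> R * real l"
      using k r1 by (intro mult_mono) auto
    then have "r * real (k+1) \<le> real n" using Rl by linarith
    then have "\<lceil>r * real (k+1)\<rceil> \<le> int n" by (simp add: ceiling_le_iff)
    then have "real (N k) \<le> real n" using N(2) k by (smt (verit) of_int_le_iff of_int_of_nat_eq)
    then show "N k \<le> n" by simp
  qed
  obtain a where a: "\<forall>j<n. 0 \<le> a j" "(\<Sum>j<n. a j) \<le> R * \<beta>"
    "real (n * (n - l) + (\<Sum>k<l. N k)) \<le> (\<Sum>j<n. \<Sum>k<n. win_A (a j) (e k))"
    using construct[OF ln emono e0 esum b0 r1(2) rn N(1) Nle N(4)[unfolded \<delta>_def]] by blast
  define BA where "BA = mset (map a [0..<n])"
  have BAbid: "is_bid_set n (R * \<beta>) BA"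
    unfolding is_bid_set_def BA_def
    using a(1,2) sum_mset_map_upt[of "\<lambda>x. x" a n] by auto
  define Sset where "Sset = {(\<pi>A, BA). is_bidding_alg n (R * \<beta>) \<pi>A BA}"
  have inS: "((\<lambda>xs. return_pmf xs), BA) \<in> Sset"
    unfolding Sset_def is_bidding_alg_def is_perm_alg_def using BAbid by auto
  have bdd: "bdd_above ((\<lambda>p. w n (fst p) pi_unif (snd p) BD) ` Sset)"
    by (rule bdd_aboveI[of _ "real n"]) (auto simp: w_le_n)
  have "w n (\<lambda>xs. return_pmf xs) pi_unif BA BD = (\<Sum>x\<in>#BA. \<Sum>d\<in>#BD. win_A x d) / n"
    using w_return[of BA n BD] sBD n1 unfolding BA_def by simp
  also have "(\<Sum>x\<in>#BA. \<Sum>d\<in>#BD. win_A x d) = (\<Sum>j<n. \<Sum>k<n. win_A (a j) (e k))"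
    unfolding BA_def sum_mset_map_upt sumBDe by simp
  finally have wv: "w n (\<lambda>xs. return_pmf xs) pi_unif BA BD = (\<Sum>j<n. \<Sum>k<n. win_A (a j) (e k)) / n" .
  have "f_val n R (min n (nat \<lfloor>real n / R\<rfloor>)) = real (n * (n - l) + m) / real n"
    unfolding minl fval using ln n1 by (simp add: field_simps of_nat_diff)
  also have "\<dots> \<le> (\<Sum>j<n. \<Sum>k<n. win_A (a j) (e k)) / n"
    using a(3) N(3) n1 by (intro divide_right_mono) auto
  also have "\<dots> \<le> (SUP p\<in>Sset. w n (fst p) pi_unif (snd p) BD)"
    using cSUP_upper[OF inS bdd] wv by simp
  also have "\<dots> = W n R \<beta> pi_unif BD" unfolding W_def Sset_def by simp
  finally show ?thesis .
qed

end
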